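(* Let $G$ be a totally disconnected locally compact group, $K\leq G$ a compact open subgroup and $\mathcal{G}=K\backslash G/K$ the quotient hypergroup. If $X$ is any $G$-boundary such that $K\backslash X$ is totally disconnected, then $K\backslash X$ (with $\mathrm{C}(K\backslash X)=\mathrm{C}(X)^K$ carrying its natural $\mathcal{G}$-action) is a $\mathcal{G}$-boundary.
   Context: A $G$-boundary is a compact $G$-space that is minimal (all orbits dense) and strongly proximal (for every Borel probability measure $\mu$ on $X$, the weak* closure of $G\mu$ contains a point mass). The quotient hypergroup $\mathcal{G}=K\backslash G/K$ has unit $K$, involution $\overline{KgK}=Kg^{-1}K$ and product $(KgK)*(KhK)=\frac{1}{[K:K\cap hKh^{-1}]}\sum_{l\in K/(K\cap hKh^{-1})}\delta_{KglhK}$ on (point masses of) elements. The $\mathcal{G}$-action on $\mathrm{C}(X)^K$ is $(KgK)f=\int_K k g f\,dk$ with $dk$ normalized Haar measure. A $\mathcal{G}$-action on a compact space $Y$ is a family of unital completely positive maps $\alpha_g$ on $\mathrm{C}(Y)$, $g \in \mathcal{G}$, with $\alpha_e=\mathrm{id}$ and $\alpha_g\alpha_h=\int\alpha_k\,d(\delta_g*\delta_h)(k)$; $\mathcal{G}$ then acts on the probability measures $\mathcal{P}(Y)$ by the dual maps. Such a $\mathcal{G}$-space $Y$ is minimal if $\overline{\mathrm{conv}}(\mathcal{G}\delta_y)=\mathcal{P}(Y)$ for every $y\in Y$, strongly proximal if for every $\mu\in\mathcal{P}(Y)$ the closure $\overline{\mathcal{G}\mu}$ contains a point mass, and a $\mathcal{G}$-boundary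 if it is minimal and strongly proximal. *)

theory Defs
  imports "HOL-Analysis.Analysis"
begin

text \<open>The group G is a type of class topological_group_add (written additively; the class
  group_add does NOT assume commutativity).  X is a compact Hausdorff type.\<close>

definition totally_disconnected_set :: "'a::topological_space set \<Rightarrow> bool" where
  "totally_disconnected_set S \<longleftrightarrow> (\<forall>T. T \<subseteq> S \<and> connected T \<longrightarrow> (\<exists>a. T \<subseteq> {a}))"

definition totally_disconnected_top :: "'a topology \<Rightarrow> bool" where
  "totally_disconnected_top T \<longleftrightarrow> (\<forall>S. connectedin T S \<longrightarrow> (\<exists>a. S \<subseteq> {a}))"

definition is_subgroup :: "'g::group_add set \<Rightarrow> bool" where
  "is_subgroup K \<longleftrightarrow> 0 \<in> K \<and> (\<forall>a\<in>K. \<forall>b\<in>K. a + b \<in> K) \<and> (\<forall>a\<in>K. - a \<in> K)"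

definition continuous_action :: "('g::topological_group_add \<Rightarrow> 'x::topological_space \<Rightarrow> 'x) \<Rightarrow> bool" where
  "continuous_action act \<longleftrightarrow>
     continuous_on UNIV (\<lambda>p. act (fst p) (snd p)) \<and>
     (\<forall>x. act 0 x = x) \<and> (\<forall>g h x. act (g + h) x = act g (act h x))"

text \<open>States (= Radon probability measures, by Riesz) on a space of real functions C.\<close>
definition is_state :: "('x \<Rightarrow> real) set \<Rightarrow> (('x \<Rightarrow> real) \<Rightarrow> real) \<Rightarrow> bool" where
  "is_state C \<phi> \<longleftrightarrow>
     (\<forall>f\<in>C. \<forall>h\<in>C. \<phi> (\<lambda>x. f x + h x) = \<phi> f + \<phi> h) \<and>
     (\<forall>f\<in>C. \<forall>c. \<phi> (\<lambda>x. c * f x) = c * \<phi> f) \<and>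
     (\<forall>f\<in>C. (\<forall>x. 0 \<le> f x) \<longrightarrow> 0 \<le> \<phi> f) \<and>
     \<phi> (\<lambda>_. 1) = 1"

definition wstar_adherent :: "('x \<Rightarrow> real) set \<Rightarrow> (('x \<Rightarrow> real) \<Rightarrow> real) set \<Rightarrow> (('x \<Rightarrow> real) \<Rightarrow> real) \<Rightarrow> bool" where
  "wstar_adherent C S \<phi> \<longleftrightarrow>
     (\<forall>F \<epsilon>. finite F \<and> F \<subseteq> C \<and> 0 < \<epsilon> \<longrightarrow> (\<exists>\<psi>\<in>S. \<forall>f\<in>F. \<bar>\<psi> f - \<phi> f\<bar> < \<epsilon>))"

definition conv_functionals :: "(('x \<Rightarrow> real) \<Rightarrow> real) set \<Rightarrow> (('x \<Rightarrow> real) \<Rightarrow> real) set" where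
  "conv_functionals S = {\<psi>. \<exists>(n::nat) w \<phi>s. (\<forall>i<n. 0 \<le> w i \<and> \<phi>s i \<in> S) \<and> (\<Sum>i<n. w i) = 1 \<and>
        \<psi> = (\<lambda>f. \<Sum>i<n. w i * \<phi>s i f)}"

definition CX :: "('x::topological_space \<Rightarrow> real) set" where
  "CX = {f. continuous_on UNIV f}"

definition G_boundary :: "('g::topological_group_add \<Rightarrow> 'x::topological_space \<Rightarrow> 'x) \<Rightarrow> bool" where
  "G_boundary act \<longleftrightarrow>
     (\<forall>x. closure (range (\<lambda>g. act g x)) = UNIV) \<and>
     (\<forall>\<phi>. is_state CX \<phi> \<longrightarrow>
        (\<exists>x. wstar_adherent CX (range (\<lambda>g. (\<lambda>f. \<phi> (\<lambda>y. f (act g y))))) (\<lambda>f. f x)))"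

definition K_orbit :: "('g \<Rightarrow> 'x \<Rightarrow> 'x) \<Rightarrow> 'g set \<Rightarrow> 'x \<Rightarrow> 'x set" where
  "K_orbit act K x = (\<lambda>k. act k x) ` K"

definition orbit_space_top :: "('g \<Rightarrow> 'x::topological_space \<Rightarrow> 'x) \<Rightarrow> 'g set \<Rightarrow> 'x set topology" where
  "orbit_space_top act K =
     topology (\<lambda>U. U \<subseteq> range (K_orbit act K) \<and> open (\<Union>U))"

text \<open>C(K\textbackslash X) = C(X)^K, the K-invariant real continuous functions on X.\<close>
definition CKX :: "('g \<Rightarrow> 'x::topological_space \<Rightarrow> 'x) \<Rightarrow> 'g set \<Rightarrow> ('x \<Rightarrow> real) set" where
  "CKX act K = {f. continuous_on UNIV f \<and> (\<forall>k\<in>K. \<forall>x. f (act k x) = f x)}"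

text \<open>The action of KgK on C(X)^K: (KgK)f = \<integral>_K k g f dk, i.e. x \<mapsto> \<integral>_K f(g^-1 k^-1 x) dk.
  For K-invariant f the integrand is constant on left cosets of the open finite-index
  subgroup M = K \<inter> gKg^-1 of K, so the normalised Haar integral is the average over K/M.\<close>
definition hyp_cosets :: "'g::group_add set \<Rightarrow> 'g \<Rightarrow> 'g set set" where
  "hyp_cosets K g = (\<lambda>l. (\<lambda>m. l + m) ` (K \<inter> (\<lambda>k. g + k + - g) ` K)) ` K"

definition hyp_act :: "('g::group_add \<Rightarrow> 'x \<Rightarrow> 'x) \<Rightarrow> 'g set \<Rightarrow> 'g \<Rightarrow> ('x \<Rightarrow> real) \<Rightarrow> ('x \<Rightarrow> real)" where
  "hyp_act act K g f = (\<lambda>x. (1 / real (card (hyp_cosets K g))) *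
      (\<Sum>C\<in>hyp_cosets K g. f (act (- g) (act (- (SOME l. l \<in> C)) x))))"

text \<open>K\textbackslash X is a \<G>-boundary: minimal (closed convex hull of \<G>\<delta>_y is all of P(K\textbackslash X))
  and strongly proximal (closure of \<G>\<mu> contains a point mass), where \<G> acts on states
  by the dual maps and point masses are evaluations at points of X (y = Kx).\<close>
definition hyp_boundary :: "('g::group_add \<Rightarrow> 'x::topological_space \<Rightarrow> 'x) \<Rightarrow> 'g set \<Rightarrow> bool" where
  "hyp_boundary act K \<longleftrightarrow>
     (\<forall>x \<psi>. is_state (CKX act K) \<psi> \<longrightarrow>
        wstar_adherent (CKX act K)
          (conv_functionals (range (\<lambda>g. (\<lambda>f. hyp_act act K g f x)))) \<psi>) \<and>
     (\<forall>\<phi>. is_state (CKX act K) \<phi> \<longrightarrow>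
        (\<exists>x. wstar_adherent (CKX act K) (range (\<lambda>g. (\<lambda>f. \<phi> (hyp_act act K g f)))) (\<lambda>f. f x)))"

end

theory Submission
  imports Defs
begin


definition cj :: "'g::group_add \<Rightarrow> 'g set \<Rightarrow> 'g set" where
  "cj g H = (\<lambda>k. g + k + - g) ` H"

definition lcos :: "'g::group_add set \<Rightarrow> 'g set \<Rightarrow> 'g set set" where
  "lcos K H = (\<lambda>l. (\<lambda>m. l + m) ` H) ` K"

definition rep :: "'g set \<Rightarrow> 'g" where "rep C = (SOME l. l \<in> C)"

lemma hyp_cosets_lcos: "hyp_cosets K g = lcos K (K \<inter> cj g K)"
  by (simp add: hyp_cosets_def lcos_def cj_def)

lemma cj_mem: "x \<in> cj g H \<longleftrightarrow> - g + x + g \<in> H"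
proof
  assume "x \<in> cj g H" then obtain k where "k \<in> H" "x = g + k + - g" by (auto simp: cj_def)
  then show "- g + x + g \<in> H" by (simp add: add.assoc)
next
  assume "- g + x + g \<in> H"
  moreover have "x = g + (- g + x + g) + - g" by (simp add: add.assoc)
  ultimately show "x \<in> cj g H" unfolding cj_def by blast
qed

lemma sg_0: "is_subgroup H \<Longrightarrow> 0 \<in> H" by (simp add: is_subgroup_def)
lemma sg_add: "is_subgroup H \<Longrightarrow> a \<in> H \<Longrightarrow> b \<in> H \<Longrightarrow> a + b \<in> H" by (simp add: is_subgroup_def)
lemma sg_minus: "is_subgroup H \<Longrightarrow> a \<in> H \<Longrightarrow> - a \<in> H" by (simp add: is_subgroup_def)
lemma sg_minus_iff: "is_subgroup H \<Longrightarrow> - a \<in> H \<longleftrightarrow> a \<in> H"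
  by (metis minus_minus sg_minus)

lemma sg_Int: "is_subgroup A \<Longrightarrow> is_subgroup B \<Longrightarrow> is_subgroup (A \<inter> B)"
  by (simp add: is_subgroup_def)

lemma sg_Inter: "(\<And>H. H \<in> HH \<Longrightarrow> is_subgroup H) \<Longrightarrow> is_subgroup (\<Inter>HH)"
  by (simp add: is_subgroup_def)

lemma sg_cj: "is_subgroup H \<Longrightarrow> is_subgroup (cj g H)"
proof -
  assume H: "is_subgroup H"
  have e1: "- g + (a + b) + g = (- g + a + g) + (- g + b + g)" for a b
    by (simp add: add.assoc)
  have e2: "- g + - a + g = - (- g + a + g)" for a
    by (simp add: minus_add add.assoc)
  have e3: "- g + - a + g = - g - a + g" for a by simp
  show ?thesis unfolding is_subgroup_def Ball_def cj_mem
    using H by (simp only: e1 e2 e3[symmetric]) (auto simp: sg_add sg_minus sg_0)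
qed

lemma lcos_mem: "k \<in> K \<Longrightarrow> (\<lambda>m. k + m) ` H \<in> lcos K H"
  by (simp add: lcos_def)

lemma sg_coset_eq: "is_subgroup H \<Longrightarrow> h \<in> H \<Longrightarrow> (\<lambda>m. l + h + m) ` H = (\<lambda>m. l + m) ` H"
proof -
  assume H: "is_subgroup H" "h \<in> H"
  show ?thesis
  proof (intro set_eqI iffI)
    fix x assume "x \<in> (\<lambda>m. l + h + m) ` H"
    then obtain m where "m \<in> H" "x = l + h + m" by auto
    then show "x \<in> (\<lambda>m. l + m) ` H" using H
      by (metis add.assoc image_eqI sg_add)
  next
    fix x assume "x \<in> (\<lambda>m. l + m) ` H"
    then obtain m where m: "m \<in> H" "x = l + m" by auto
    then have "x = l + h + (- h + m)" by (simp add: add.assoc)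
    moreover have "- h + m \<in> H" using H m by (simp add: sg_add sg_minus)
    ultimately show "x \<in> (\<lambda>m. l + h + m) ` H" by blast
  qed
qed

lemma lcos_rep:
  assumes "is_subgroup H" "C \<in> lcos K H" "c \<in> C"
  shows "C = (\<lambda>m. c + m) ` H"
proof -
  obtain l where l: "C = (\<lambda>m. l + m) ` H" using assms(2) by (auto simp: lcos_def)
  then obtain h where h: "h \<in> H" "c = l + h" using assms(3) by auto
  show ?thesis using sg_coset_eq[OF assms(1) h(1), of l] l h by simp
qed

lemma lcos_sub: "is_subgroup K \<Longrightarrow> H \<subseteq> K \<Longrightarrow> C \<in> lcos K H \<Longrightarrow> C \<subseteq> K"
  by (auto simp: lcos_def intro: sg_add)

lemma lcos_rep_in: "is_subgroup H \<Longrightarrow> C \<in> lcos K H \<Longrightarrow> rep C \<in> C"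
  unfolding rep_def lcos_def by (rule someI_ex) (auto intro: sg_0 intro!: image_eqI[of _ _ 0])

lemma lcos_eq:
  assumes "is_subgroup H" "C \<in> lcos K H" "C' \<in> lcos K H" "c \<in> C" "c \<in> C'"
  shows "C = C'"
  using lcos_rep[OF assms(1,2,4)] lcos_rep[OF assms(1,3,5)] by simp

lemma lcos_self: "is_subgroup H \<Longrightarrow> k \<in> (\<lambda>m. k + m) ` H"
  by (auto intro!: image_eqI[of _ _ 0] sg_0)

lemma lcos_trans:
  assumes "is_subgroup K" "l \<in> K" "C \<in> lcos K H"
  shows "(\<lambda>m. l + m) ` C \<in> lcos K H"
proof -
  obtain k where k: "k \<in> K" "C = (\<lambda>m. k + m) ` H" using assms(3) by (auto simp: lcos_def)
  then have "(\<lambda>m. l + m) ` C = (\<lambda>m. (l + k) + m) ` H" by (auto simp: image_image add.assoc)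
  then show ?thesis using k assms by (simp add: lcos_mem sg_add)
qed

lemma lcos_bij:
  assumes "is_subgroup K" "l \<in> K"
  shows "bij_betw (\<lambda>C. (\<lambda>m. l + m) ` C) (lcos K H) (lcos K H)"
proof (rule bij_betw_byWitness[where f' = "\<lambda>C. (\<lambda>m. - l + m) ` C"])
  show "\<forall>a\<in>lcos K H. (\<lambda>m. - l + m) ` (\<lambda>m. l + m) ` a = a"
    by (simp add: image_image add.assoc[symmetric])
  show "\<forall>a'\<in>lcos K H. (\<lambda>m. l + m) ` (\<lambda>m. - l + m) ` a' = a'"
    by (simp add: image_image add.assoc[symmetric])
  show "(\<lambda>C. (+) l ` C) ` lcos K H \<subseteq> lcos K H" using lcos_trans[OF assms] by auto
  show "(\<lambda>C. (+) (- l) ` C) ` lcos K H \<subseteq> lcos K H" using lcos_trans[OF assms(1) sg_minus[OF assms]] by auto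
qed

lemma open_translate:
  fixes H :: "'g::topological_group_add set"
  assumes "open H" shows "open ((\<lambda>m. l + m) ` H)"
proof -
  have "(\<lambda>m. l + m) ` H = (\<lambda>x. - l + x) -` H"
    by (auto simp: image_iff add.assoc[symmetric]) (metis add_minus_cancel)
  moreover have "continuous_on UNIV (\<lambda>x. - l + x)" by (intro continuous_intros)
  ultimately show ?thesis using open_vimage[OF assms] by simp
qed

lemma open_cj:
  fixes H :: "'g::topological_group_add set"
  assumes "open H" shows "open (cj g H)"
proof -
  have "cj g H = (\<lambda>x. - g + x + g) -` H" by (auto simp: cj_mem)
  moreover have "continuous_on UNIV (\<lambda>x. - g + x + g)" by (intro continuous_intros)
  ultimately show ?thesis using open_vimage[OF assms] by simp
qed

lemma lcos_finite:
  fixes H :: "'g::topological_group_add set"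
  assumes "is_subgroup K" "is_subgroup H" "H \<subseteq> K" "open H" "compact K"
  shows "finite (lcos K H)"
proof -
  have cov: "K \<subseteq> \<Union>(lcos K H)"
    using lcos_self[OF assms(2)] by (auto simp: lcos_def)
  have op: "\<forall>C\<in>lcos K H. open C" using open_translate[OF assms(4)] by (auto simp: lcos_def)
  obtain D where D: "D \<subseteq> lcos K H" "finite D" "K \<subseteq> \<Union>D"
    using compactE[OF assms(5) cov] op by metis
  have "lcos K H \<subseteq> D"
  proof
    fix C assume C: "C \<in> lcos K H"
    have "rep C \<in> K" using lcos_rep_in[OF assms(2) C] lcos_sub[OF assms(1,3) C] by auto
    then obtain C' where "C' \<in> D" "rep C \<in> C'" using D by auto
    then show "C \<in> D" using lcos_eq[OF assms(2) C, of C' "rep C"] D(1) lcos_rep_in[OF assms(2) C] by auto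
  qed
  then show ?thesis using D(2) finite_subset by blast
qed


definition fspace :: "('x \<Rightarrow> real) set \<Rightarrow> bool" where
  "fspace C \<longleftrightarrow> (\<forall>f\<in>C. \<forall>h\<in>C. (\<lambda>x. f x + h x) \<in> C) \<and> (\<forall>f\<in>C. \<forall>c. (\<lambda>x. c * f x) \<in> C) \<and> (\<forall>c. (\<lambda>x. c) \<in> C)"

lemma fs_add: "fspace C \<Longrightarrow> f \<in> C \<Longrightarrow> h \<in> C \<Longrightarrow> (\<lambda>x. f x + h x) \<in> C" by (simp add: fspace_def)
lemma fs_cmul: "fspace C \<Longrightarrow> f \<in> C \<Longrightarrow> (\<lambda>x. c * f x) \<in> C" by (simp add: fspace_def)
lemma fs_const: "fspace C \<Longrightarrow> (\<lambda>x. c) \<in> C" by (simp add: fspace_def)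
lemma fs_minus: "fspace C \<Longrightarrow> f \<in> C \<Longrightarrow> (\<lambda>x. - f x) \<in> C"
  using fs_cmul[of C f "-1"] by simp
lemma fs_diff: "fspace C \<Longrightarrow> f \<in> C \<Longrightarrow> h \<in> C \<Longrightarrow> (\<lambda>x. f x - h x) \<in> C"
  using fs_add[of C f "\<lambda>x. - h x"] fs_minus[of C h] by simp
lemma fs_sum:
  assumes "fspace C" "finite S" "\<And>i. i \<in> S \<Longrightarrow> u i \<in> C"
  shows "(\<lambda>x. \<Sum>i\<in>S. u i x) \<in> C"
  using assms(2,3)
proof (induction S rule: finite_induct)
  case empty then show ?case using fs_const[OF assms(1), of 0] by simp
next
  case (insert a S) then show ?case using fs_add[OF assms(1), of "u a" "\<lambda>x. \<Sum>i\<in>S. u i x"] by simp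
qed

lemma st_add: "is_state C \<phi> \<Longrightarrow> f \<in> C \<Longrightarrow> h \<in> C \<Longrightarrow> \<phi> (\<lambda>x. f x + h x) = \<phi> f + \<phi> h"
  by (simp add: is_state_def)
lemma st_cmul: "is_state C \<phi> \<Longrightarrow> f \<in> C \<Longrightarrow> \<phi> (\<lambda>x. c * f x) = c * \<phi> f"
  by (simp add: is_state_def)
lemma st_pos: "is_state C \<phi> \<Longrightarrow> f \<in> C \<Longrightarrow> (\<And>x. 0 \<le> f x) \<Longrightarrow> 0 \<le> \<phi> f"
  by (simp add: is_state_def)
lemma st_one: "is_state C \<phi> \<Longrightarrow> \<phi> (\<lambda>x. 1) = 1"
  by (simp add: is_state_def)

lemma st_const: "is_state C \<phi> \<Longrightarrow> fspace C \<Longrightarrow> \<phi> (\<lambda>x. c) = c"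
  using st_cmul[of C \<phi> "\<lambda>x. 1" c] st_one[of C \<phi>] fs_const[of C 1] by simp

lemma st_minus: "is_state C \<phi> \<Longrightarrow> f \<in> C \<Longrightarrow> \<phi> (\<lambda>x. - f x) = - \<phi> f"
  using st_cmul[of C \<phi> f "-1"] by simp

lemma st_diff: "is_state C \<phi> \<Longrightarrow> fspace C \<Longrightarrow> f \<in> C \<Longrightarrow> h \<in> C \<Longrightarrow> \<phi> (\<lambda>x. f x - h x) = \<phi> f - \<phi> h"
  using st_add[of C \<phi> f "\<lambda>x. - h x"] st_minus[of C \<phi> h] fs_minus[of C h] by simp

lemma st_mono: "is_state C \<phi> \<Longrightarrow> fspace C \<Longrightarrow> f \<in> C \<Longrightarrow> h \<in> C \<Longrightarrow> (\<And>x. f x \<le> h x) \<Longrightarrow> \<phi> f \<le> \<phi> h"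
  using st_pos[of C \<phi> "\<lambda>x. h x - f x"] st_diff[of C \<phi> h f] fs_diff[of C h f] by simp

lemma st_abs: "is_state C \<phi> \<Longrightarrow> fspace C \<Longrightarrow> f \<in> C \<Longrightarrow> b \<in> C \<Longrightarrow> (\<And>x. \<bar>f x\<bar> \<le> b x) \<Longrightarrow> \<bar>\<phi> f\<bar> \<le> \<phi> b"
proof -
  assume a: "is_state C \<phi>" "fspace C" "f \<in> C" "b \<in> C" "\<And>x. \<bar>f x\<bar> \<le> b x"
  have "\<phi> f \<le> \<phi> b" using a(5) by (intro st_mono[OF a(1,2,3,4)]) (auto simp: abs_le_iff)
  moreover have "\<phi> (\<lambda>x. - f x) \<le> \<phi> b" using a(5)
    by (intro st_mono[OF a(1,2) fs_minus[OF a(2,3)] a(4)]) (auto simp: abs_le_iff)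
  ultimately show ?thesis using st_minus[OF a(1,3)] by linarith
qed

lemma st_sum:
  assumes "is_state C \<phi>" "fspace C" "finite S" "\<And>i. i \<in> S \<Longrightarrow> u i \<in> C"
  shows "\<phi> (\<lambda>x. \<Sum>i\<in>S. u i x) = (\<Sum>i\<in>S. \<phi> (u i))"
  using assms(3,4)
proof (induction S rule: finite_induct)
  case empty then show ?case using st_const[OF assms(1,2), of 0] by simp
next
  case (insert a S)
  have m: "(\<lambda>x. \<Sum>i\<in>S. u i x) \<in> C" using fs_sum[OF assms(2) insert(1)] insert(4) by simp
  have "\<phi> (\<lambda>x. \<Sum>i\<in>insert a S. u i x) = \<phi> (\<lambda>x. u a x + (\<Sum>i\<in>S. u i x))"
    using insert(1,2) by simp
  also have "\<dots> = \<phi> (u a) + \<phi> (\<lambda>x. \<Sum>i\<in>S. u i x)"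
    using st_add[OF assms(1), of "u a" "\<lambda>x. \<Sum>i\<in>S. u i x"] m insert(4) by simp
  also have "\<dots> = (\<Sum>i\<in>insert a S. \<phi> (u i))"
  proof -
    have "\<phi> (\<lambda>x. \<Sum>i\<in>S. u i x) = (\<Sum>i\<in>S. \<phi> (u i))" by (rule insert.IH) (use insert.prems in auto)
    then show ?thesis using insert(1,2) by simp
  qed
  finally show ?case .
qed

lemma fspace_CX: "fspace CX"
  unfolding fspace_def CX_def mem_Collect_eq
  by (auto intro: continuous_on_add continuous_on_mult[OF continuous_on_const] continuous_on_const)

lemma fspace_CKX: "fspace (CKX act K)"
  unfolding fspace_def CKX_def mem_Collect_eq
  by (auto intro: continuous_on_add continuous_on_mult[OF continuous_on_const] continuous_on_const)

lemma CKX_CX: "CKX act K \<subseteq> CX" by (auto simp: CKX_def CX_def)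

lemma CKX_mult: "f \<in> CKX act K \<Longrightarrow> h \<in> CKX act K \<Longrightarrow> (\<lambda>x. f x * h x) \<in> CKX act K"
  unfolding CKX_def mem_Collect_eq by (auto intro: continuous_on_mult)

lemma CKX_comp: "f \<in> CKX act K \<Longrightarrow> continuous_on UNIV \<theta> \<Longrightarrow> (\<lambda>x. \<theta> (f x)) \<in> CKX act K"
  unfolding CKX_def by (simp add: continuous_on_compose2[of UNIV \<theta> UNIV f])


locale bset =
  fixes act :: "'g::topological_group_add \<Rightarrow> 'x::topological_space \<Rightarrow> 'x" and K :: "'g set"
  assumes sgK: "is_subgroup K" and cK: "compact K" and oK: "open K"
    and cXc: "compact (UNIV::'x set)" and ca: "continuous_action act"
begin

lemma act0: "act 0 x = x" using ca by (simp add: continuous_action_def)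
lemma act_add: "act (g + h) x = act g (act h x)" using ca by (simp add: continuous_action_def)

lemma cont_act: "continuous_on UNIV (act g)"
proof -
  have c: "continuous_on UNIV (\<lambda>p. act (fst p) (snd p))" using ca by (simp add: continuous_action_def)
  have "continuous_on UNIV (\<lambda>y. (g, y))" by (intro continuous_intros)
  from continuous_on_compose2[OF c this] show ?thesis by simp
qed

lemma CX_act: "f \<in> CX \<Longrightarrow> (\<lambda>y. f (act g y)) \<in> CX"
  unfolding CX_def using continuous_on_compose2[OF _ cont_act, of UNIV f g] by simp

lemma CKX_inv: "f \<in> CKX act K \<Longrightarrow> k \<in> K \<Longrightarrow> f (act k x) = f x"
  by (simp add: CKX_def)

abbreviation MK where "MK g \<equiv> K \<inter> cj g K"

lemma MK_sg: "is_subgroup (MK g)" by (simp add: sg_Int sgK sg_cj)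
lemma MK_open: "open (MK g)" by (simp add: oK open_cj open_Int)

lemma hc_fin: "finite (hyp_cosets K g)"
  unfolding hyp_cosets_lcos by (rule lcos_finite[OF sgK MK_sg _ MK_open cK]) auto

lemma hc_card: "card (hyp_cosets K g) > 0"
proof -
  have "hyp_cosets K g \<noteq> {}" unfolding hyp_cosets_lcos lcos_def using sg_0[OF sgK] by auto
  then show ?thesis using hc_fin card_gt_0_iff by blast
qed

lemma hc_rep: "C \<in> hyp_cosets K g \<Longrightarrow> rep C \<in> C \<and> rep C \<in> K"
  unfolding hyp_cosets_lcos using lcos_rep_in[OF MK_sg] lcos_sub[OF sgK, of "MK g"] by blast

lemma hyp_act_rep: "hyp_act act K g f = (\<lambda>x. (1 / real (card (hyp_cosets K g))) *
      (\<Sum>C\<in>hyp_cosets K g. f (act (- g) (act (- rep C) x))))"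
  by (simp add: hyp_act_def rep_def)

lemma inv_M:
  assumes f: "f \<in> CKX act K" and m: "m \<in> cj g K"
  shows "f (act (- g) (act m y)) = f (act (- g) y)"
proof -
  have k: "- g + m + g \<in> K" using m by (simp add: cj_mem)
  have "act (- g) (act m y) = act (- g + m + g) (act (- g) y)"
    by (simp only: act_add[symmetric] add.assoc right_minus add_0_right)
  then show ?thesis using CKX_inv[OF f k] by simp
qed

lemma hyp_act_CKX:
  assumes f: "f \<in> CKX act K"
  shows "hyp_act act K g f \<in> CKX act K"
proof -
  let ?c = "1 / real (card (hyp_cosets K g))"
  let ?H = "hyp_cosets K g"
  have fc: "continuous_on UNIV f" using f by (simp add: CKX_def)
  have tc: "continuous_on UNIV (\<lambda>x. f (act (- g) (act (- rep C) x)))" for C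
    by (rule continuous_on_compose2[OF fc], rule continuous_on_compose2[OF cont_act cont_act]) auto
  have cont: "continuous_on UNIV (hyp_act act K g f)"
    unfolding hyp_act_rep by (intro continuous_on_mult continuous_on_const continuous_on_sum tc)
  have inv: "hyp_act act K g f (act k x) = hyp_act act K g f x" if k: "k \<in> K" for k x
  proof -
    define u where "u l = f (act (- g) (act (- l) x))" for l
    have uM: "u (l + m) = u l" if "m \<in> MK g" for l m
    proof -
      have "- m \<in> cj g K" using that sg_minus[OF sg_cj[OF sgK]] by blast
      moreover have "act (- (l + m)) x = act (- m) (act (- l) x)"
        by (simp only: minus_add act_add)
      ultimately show ?thesis unfolding u_def using inv_M[OF f, of "- m" g "act (- l) x"]
        by simp
    qed
    have mk: "- k \<in> K" using sg_minus[OF sgK k] .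
    have tm: "f (act (- g) (act (- rep C) (act k x))) = u (rep ((\<lambda>m. - k + m) ` C))"
      if C: "C \<in> ?H" for C
    proof -
      have "f (act (- g) (act (- rep C) (act k x))) = u (- k + rep C)"
        unfolding u_def by (simp add: act_add[symmetric] minus_add)
      also have "\<dots> = u (rep ((\<lambda>m. - k + m) ` C))"
      proof -
        have C': "(\<lambda>m. - k + m) ` C \<in> lcos K (MK g)"
          using lcos_trans[OF sgK mk] C unfolding hyp_cosets_lcos by blast
        have in1: "- k + rep C \<in> (\<lambda>m. - k + m) ` C" using hc_rep[OF C] by blast
        have "(\<lambda>m. - k + m) ` C = (\<lambda>m. rep ((\<lambda>m. - k + m) ` C) + m) ` MK g"
          using lcos_rep[OF MK_sg C' lcos_rep_in[OF MK_sg C']] .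
        then obtain m where "m \<in> MK g" "- k + rep C = rep ((\<lambda>m. - k + m) ` C) + m"
          using in1 by auto
        then show ?thesis using uM by simp
      qed
      finally show ?thesis .
    qed
    have "(\<Sum>C\<in>?H. f (act (- g) (act (- rep C) (act k x)))) = (\<Sum>C\<in>?H. u (rep ((\<lambda>m. - k + m) ` C)))"
      using tm by (rule sum.cong[OF refl])
    also have "\<dots> = (\<Sum>C\<in>?H. u (rep C))"
      using sum.reindex_bij_betw[OF lcos_bij[OF sgK mk, of "MK g"], of "\<lambda>C. u (rep C)"]
      unfolding hyp_cosets_lcos by simp
    finally show ?thesis unfolding hyp_act_rep u_def by simp
  qed
  show ?thesis using cont inv by (simp add: CKX_def)
qed

lemma hyp_state:
  assumes st: "is_state CX \<Phi>" and f: "f \<in> CKX act K"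
    and inv: "\<And>l. l \<in> K \<Longrightarrow> \<Phi> (\<lambda>y. f (act (- g) (act l y))) = \<Phi> (\<lambda>y. f (act (- g) y))"
  shows "\<Phi> (hyp_act act K g f) = \<Phi> (\<lambda>y. f (act (- g) y))"
proof -
  let ?H = "hyp_cosets K g"
  have fX: "f \<in> CX" using f CKX_CX by blast
  have tX: "(\<lambda>x. f (act (- g) (act l x))) \<in> CX" for l
    using CX_act[OF CX_act[OF fX, of "- g"], of l] by simp
  have sX: "(\<lambda>x. \<Sum>C\<in>?H. f (act (- g) (act (- rep C) x))) \<in> CX"
    by (rule fs_sum[OF fspace_CX hc_fin]) (rule tX)
  have "\<Phi> (hyp_act act K g f) = (1 / real (card ?H)) * \<Phi> (\<lambda>x. \<Sum>C\<in>?H. f (act (- g) (act (- rep C) x)))"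
    unfolding hyp_act_rep by (rule st_cmul[OF st sX])
  also have "\<Phi> (\<lambda>x. \<Sum>C\<in>?H. f (act (- g) (act (- rep C) x))) = (\<Sum>C\<in>?H. \<Phi> (\<lambda>x. f (act (- g) (act (- rep C) x))))"
    by (rule st_sum[OF st fspace_CX hc_fin]) (rule tX)
  also have "\<dots> = (\<Sum>C\<in>?H. \<Phi> (\<lambda>y. f (act (- g) y)))"
    by (rule sum.cong[OF refl], rule inv) (use hc_rep sg_minus[OF sgK] in blast)
  finally show ?thesis using hc_card[of g] by simp
qed

end

definition hat :: "real \<Rightarrow> int \<Rightarrow> real \<Rightarrow> real" where
  "hat d k t = max 0 (1 - \<bar>t / d - of_int k\<bar>)"

lemma hat_cont: "continuous_on UNIV (hat d k)"
proof -
  have "hat d k = (\<lambda>t. max 0 (1 - \<bar>t * (1 / d) - of_int k\<bar>))" by (auto simp: hat_def)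
  moreover have "continuous_on UNIV (\<lambda>t::real. max 0 (1 - \<bar>t * (1 / d) - of_int k\<bar>))"
    by (intro continuous_intros)
  ultimately show ?thesis by simp
qed

lemma hat_nonneg: "0 \<le> hat d k t" by (simp add: hat_def)

lemma hat_pos: "d > 0 \<Longrightarrow> hat d k t > 0 \<Longrightarrow> \<bar>t - d * of_int k\<bar> < d"
proof -
  assume d: "d > 0" and h: "hat d k t > 0"
  then have 1: "\<bar>t / d - of_int k\<bar> < 1" unfolding hat_def by linarith
  have 2: "t / d - of_int k = (t - d * of_int k) / d" using d by (simp add: field_simps)
  have "\<bar>t - d * of_int k\<bar> / d < 1" using 1 unfolding 2 abs_divide using d by simp
  then show ?thesis using d by (simp only: pos_divide_less_eq mult_1_left)
qed
lemma hat_sum: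
  assumes d: "d > 0" and t: "\<bar>t\<bar> \<le> real_of_int (N - 1) * d"
  shows "(\<Sum>k\<in>{-N..N}. hat d k t) = 1"
proof -
  define s where "s = t / d"
  define m where "m = \<lfloor>s\<rfloor>"
  have ms: "of_int m \<le> s" "s < of_int m + 1" unfolding m_def by linarith+
  have sb: "\<bar>s\<bar> \<le> real_of_int (N - 1)"
  proof -
    have "\<bar>s\<bar> = \<bar>t\<bar> / d" unfolding s_def abs_divide using d by simp
    then show ?thesis using t d by (simp only: pos_divide_le_eq)
  qed
  have mr: "m \<in> {-N..N}" "m + 1 \<in> {-N..N}" using ms sb by (auto simp: abs_le_iff)
  have z: "hat d k t = 0" if "k \<in> {-N..N} - {m, m+1}" for k
  proof -
    have "k \<le> m - 1 \<or> k \<ge> m + 2" using that by auto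
    then have "\<bar>s - of_int k\<bar> \<ge> 1" using ms by (auto simp: abs_if)
    then show ?thesis unfolding hat_def s_def[symmetric] by simp
  qed
  have "(\<Sum>k\<in>{-N..N}. hat d k t) = (\<Sum>k\<in>{m, m+1}. hat d k t)"
    by (rule sum.mono_neutral_right) (use mr z in auto)
  also have "\<dots> = hat d m t + hat d (m+1) t" by simp
  also have "\<dots> = (1 - (s - of_int m)) + (1 - (of_int m + 1 - s))"
    using ms unfolding hat_def s_def[symmetric] by (simp add: abs_if)
  also have "\<dots> = 1" by simp
  finally show ?thesis .
qed

lemma mix_sum:
  fixes SS :: "'i \<Rightarrow> 'y set" and ww :: "'i \<Rightarrow> 'y \<Rightarrow> real"
  assumes I: "finite I" and fin: "\<And>k. k \<in> I \<Longrightarrow> finite (SS k)"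
  shows "(\<Sum>y\<in>(\<Union>k\<in>I. SS k). (\<Sum>k\<in>I. if y \<in> SS k then ww k y else 0) * h y) = (\<Sum>k\<in>I. \<Sum>y\<in>SS k. ww k y * h y)"
proof -
  let ?S = "\<Union>k\<in>I. SS k"
  have fS: "finite ?S" using I fin by auto
  have "(\<Sum>y\<in>?S. (\<Sum>k\<in>I. if y \<in> SS k then ww k y else 0) * h y) = (\<Sum>y\<in>?S. \<Sum>k\<in>I. if y \<in> SS k then ww k y * h y else 0)"
    by (auto simp: sum_distrib_right intro!: sum.cong)
  also have "\<dots> = (\<Sum>k\<in>I. \<Sum>y\<in>?S. if y \<in> SS k then ww k y * h y else 0)" by (rule sum.swap)
  also have "\<dots> = (\<Sum>k\<in>I. \<Sum>y\<in>?S \<inter> SS k. ww k y * h y)"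
    by (rule sum.cong[OF refl]) (simp add: sum.inter_restrict[OF fS])
  also have "\<dots> = (\<Sum>k\<in>I. \<Sum>y\<in>SS k. ww k y * h y)"
    by (rule sum.cong[OF refl]) (metis (no_types, lifting) Int_absorb1 UN_upper)
  finally show ?thesis .
qed

lemma sum_abs_diff_le:
  fixes a b c :: "'i \<Rightarrow> real"
  assumes "\<And>k. k \<in> I \<Longrightarrow> \<bar>a k - b k\<bar> \<le> c k"
  shows "\<bar>(\<Sum>k\<in>I. a k) - (\<Sum>k\<in>I. b k)\<bar> \<le> (\<Sum>k\<in>I. c k)"
proof -
  have "\<bar>(\<Sum>k\<in>I. a k) - (\<Sum>k\<in>I. b k)\<bar> = \<bar>\<Sum>k\<in>I. a k - b k\<bar>" by (simp add: sum_subtractf)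
  also have "\<dots> \<le> (\<Sum>k\<in>I. \<bar>a k - b k\<bar>)" by (rule sum_abs)
  also have "\<dots> \<le> (\<Sum>k\<in>I. c k)" using assms by (rule sum_mono)
  finally show ?thesis .
qed



context bset begin

lemma CKX_bounded: "f \<in> CKX act K \<Longrightarrow> \<exists>B. \<forall>x. \<bar>f x\<bar> \<le> B"
proof -
  assume "f \<in> CKX act K"
  then have "continuous_on UNIV f" by (simp add: CKX_def)
  then have "compact (range f)" using compact_continuous_image cXc by blast
  then have "bounded (range f)" by (rule compact_imp_bounded)
  then show ?thesis by (auto simp: bounded_iff)
qed

lemma approx_gen:
  assumes st: "is_state (CKX act K) \<psi>" and e: "\<epsilon> > 0" and F: "finite F" "F \<subseteq> CKX act K"
  shows "\<forall>p \<in> CKX act K. (\<forall>x. 0 \<le> p x) \<longrightarrow> (\<exists>S w. finite S \<and> (\<forall>y\<in>S. 0 \<le> w y \<and> 0 < p y) \<and>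
      (\<Sum>y\<in>S. w y) = \<psi> p \<and> (\<forall>f\<in>F. \<bar>\<psi> (\<lambda>x. f x * p x) - (\<Sum>y\<in>S. w y * f y)\<bar> \<le> \<epsilon> * \<psi> p))"
  using F
proof (induction F rule: finite_induct)
  case empty
  show ?case
  proof (intro ballI impI)
    fix p assume p: "p \<in> CKX act K" "\<forall>x. 0 \<le> p x"
    show "\<exists>S w. finite S \<and> (\<forall>y\<in>S. 0 \<le> w y \<and> 0 < p y) \<and> (\<Sum>y\<in>S. w y) = \<psi> p \<and>
          (\<forall>f\<in>{}. \<bar>\<psi> (\<lambda>x. f x * p x) - (\<Sum>y\<in>S. w y * f y)\<bar> \<le> \<epsilon> * \<psi> p)"
    proof (cases "\<exists>y. 0 < p y")
      case True
      then obtain y where y: "0 < p y" by blast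
      have "0 \<le> \<psi> p" using st_pos[OF st p(1)] p(2) by blast
      then show ?thesis using y by (intro exI[of _ "{y}"] exI[of _ "\<lambda>_. \<psi> p"]) auto
    next
      case False
      then have "p = (\<lambda>x. 0)" using p(2) by (auto intro!: ext simp: not_less order.antisym)
      then have "\<psi> p = 0" using st_const[OF st fspace_CKX, of 0] by simp
      then show ?thesis by (intro exI[of _ "{}"]) auto
    qed
  qed
next
  case (insert g F)
  have gC: "g \<in> CKX act K" and FC: "F \<subseteq> CKX act K" using insert.prems by auto
  note IH = insert.IH[OF FC]
  obtain B where B: "\<And>x. \<bar>g x\<bar> \<le> B" using CKX_bounded[OF gC] by blast
  define d where "d = \<epsilon> / 2"
  have d: "d > 0" using e by (simp add: d_def)
  define N :: int where "N = \<lceil>B / d\<rceil> + 1"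
  have gN: "\<bar>g x\<bar> \<le> real_of_int (N - 1) * d" for x
  proof -
    have "B / d \<le> real_of_int (N - 1)" unfolding N_def by simp
    then have "B \<le> real_of_int (N - 1) * d" using d by (simp add: divide_le_eq)
    then show ?thesis using B[of x] by linarith
  qed
  define I where "I = {-N..N}"
  have fI: "finite I" by (simp add: I_def)
  show ?case
  proof (intro ballI impI)
    fix p assume p: "p \<in> CKX act K" "\<forall>x. 0 \<le> p x"
    define pk where "pk k = (\<lambda>x. p x * hat d k (g x))" for k
    have pkC: "pk k \<in> CKX act K" for k
      unfolding pk_def by (rule CKX_mult[OF p(1) CKX_comp[OF gC hat_cont]])
    have pk0: "0 \<le> pk k x" for k x unfolding pk_def using p(2) hat_nonneg by simp
    have psum: "(\<Sum>k\<in>I. pk k x) = p x" for x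
      unfolding pk_def I_def by (simp add: sum_distrib_left[symmetric] hat_sum[OF d gN])
    define R where "R k S w \<longleftrightarrow> finite S \<and> (\<forall>y\<in>S. 0 \<le> w y \<and> 0 < pk k y) \<and>
      (\<Sum>y\<in>S. w y) = \<psi> (pk k) \<and> (\<forall>f\<in>F. \<bar>\<psi> (\<lambda>x. f x * pk k x) - (\<Sum>y\<in>S. w y * f y)\<bar> \<le> \<epsilon> * \<psi> (pk k))"
      for k S and w :: "'x \<Rightarrow> real"
    have ex: "\<exists>S w. R k S w" for k
    proof -
      have "(\<forall>x. 0 \<le> pk k x)" using pk0 by blast
      then show ?thesis unfolding R_def using IH pkC[of k] by blast
    qed
    then have "\<forall>k. \<exists>Sw. R k (fst Sw) (snd Sw)" by auto
    from choice[OF this] obtain Sw where Sw: "\<And>k. R k (fst (Sw k)) (snd (Sw k))" by blast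
    define SS where "SS k = fst (Sw k)" for k
    define ww where "ww k = snd (Sw k)" for k
    have Rk: "R k (SS k) (ww k)" for k using Sw by (simp add: SS_def ww_def)
    have SSf: "finite (SS k)" for k using Rk unfolding R_def by blast
    have SSp: "y \<in> SS k \<Longrightarrow> 0 \<le> ww k y \<and> 0 < pk k y" for k y using Rk unfolding R_def by blast
    have SSs: "(\<Sum>y\<in>SS k. ww k y) = \<psi> (pk k)" for k using Rk unfolding R_def by blast
    have SSe: "f \<in> F \<Longrightarrow> \<bar>\<psi> (\<lambda>x. f x * pk k x) - (\<Sum>y\<in>SS k. ww k y * f y)\<bar> \<le> \<epsilon> * \<psi> (pk k)" for k f
      using Rk unfolding R_def by blast
    define S where "S = (\<Union>k\<in>I. SS k)"
    define w where "w y = (\<Sum>k\<in>I. if y \<in> SS k then ww k y else 0)" for y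
    have mix: "(\<Sum>y\<in>S. w y * h y) = (\<Sum>k\<in>I. \<Sum>y\<in>SS k. ww k y * h y)" for h
      unfolding S_def w_def by (rule mix_sum[OF fI SSf])
    have psi_split: "\<psi> (\<lambda>x. f x * p x) = (\<Sum>k\<in>I. \<psi> (\<lambda>x. f x * pk k x))" if f: "f \<in> CKX act K" for f
    proof -
      have "(\<lambda>x. f x * p x) = (\<lambda>x. \<Sum>k\<in>I. f x * pk k x)"
        by (simp add: sum_distrib_left[symmetric] psum)
      then show ?thesis using st_sum[OF st fspace_CKX fI, of "\<lambda>k x. f x * pk k x"] CKX_mult[OF f pkC] by simp
    qed
    have perk: "\<bar>\<psi> (\<lambda>x. f x * pk k x) - (\<Sum>y\<in>SS k. ww k y * f y)\<bar> \<le> \<epsilon> * \<psi> (pk k)"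
      if k: "k \<in> I" and f: "f \<in> insert g F" for k f
    proof (cases "f \<in> F")
      case True then show ?thesis using SSe by blast
    next
      case False
      then have fg: "f = g" using f by simp
      let ?c = "d * of_int k"
      have a1: "\<bar>\<psi> (\<lambda>x. g x * pk k x) - ?c * \<psi> (pk k)\<bar> \<le> d * \<psi> (pk k)"
      proof -
        have m1: "(\<lambda>x. (g x - ?c) * pk k x) \<in> CKX act K"
          using CKX_mult[OF fs_diff[OF fspace_CKX gC fs_const[OF fspace_CKX]] pkC] by simp
        have "\<psi> (\<lambda>x. (g x - ?c) * pk k x) = \<psi> (\<lambda>x. g x * pk k x) - ?c * \<psi> (pk k)"
          using st_diff[OF st fspace_CKX CKX_mult[OF gC pkC] fs_cmul[OF fspace_CKX pkC, of ?c]]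
            st_cmul[OF st pkC, of ?c] by (simp add: algebra_simps)
        moreover have "\<bar>\<psi> (\<lambda>x. (g x - ?c) * pk k x)\<bar> \<le> \<psi> (\<lambda>x. d * pk k x)"
        proof (rule st_abs[OF st fspace_CKX m1 fs_cmul[OF fspace_CKX pkC]])
          fix x show "\<bar>(g x - ?c) * pk k x\<bar> \<le> d * pk k x"
          proof (cases "pk k x = 0")
            case True then show ?thesis by simp
          next
            case False
            then have "hat d k (g x) > 0" using pk0[of k x] hat_nonneg[of d k "g x"] p(2)
              unfolding pk_def by (metis less_eq_real_def mult_zero_right)
            then have "\<bar>g x - ?c\<bar> < d" by (rule hat_pos[OF d])
            then show ?thesis using pk0[of k x] by (simp add: abs_mult mult_right_mono)
          qed
        qed
        ultimately show ?thesis using st_cmul[OF st pkC, of d] by simp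
      qed
      have a2: "\<bar>(\<Sum>y\<in>SS k. ww k y * g y) - ?c * \<psi> (pk k)\<bar> \<le> d * \<psi> (pk k)"
      proof -
        have cc: "?c * \<psi> (pk k) = (\<Sum>y\<in>SS k. ww k y * ?c)"
          unfolding SSs[of k, symmetric] by (simp add: sum_distrib_left mult_ac)
        have "(\<Sum>y\<in>SS k. ww k y * g y) - ?c * \<psi> (pk k) = (\<Sum>y\<in>SS k. ww k y * (g y - ?c))"
          unfolding cc sum_subtractf[symmetric] by (simp add: right_diff_distrib)
        also have "\<bar>\<dots>\<bar> \<le> (\<Sum>y\<in>SS k. ww k y * d)"
        proof -
          have "\<bar>ww k y * (g y - ?c)\<bar> \<le> ww k y * d" if y: "y \<in> SS k" for y
          proof -
            have "0 < pk k y" "0 \<le> ww k y" using SSp[OF y] by auto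
            then have "hat d k (g y) > 0" unfolding pk_def using hat_nonneg[of d k "g y"] p(2)
              by (metis less_eq_real_def mult_zero_right)
            then have "\<bar>g y - ?c\<bar> < d" by (rule hat_pos[OF d])
            then show ?thesis using \<open>0 \<le> ww k y\<close> by (simp add: abs_mult mult_left_mono)
          qed
          then show ?thesis by (intro order.trans[OF sum_abs] sum_mono) auto
        qed
        also have "\<dots> = d * \<psi> (pk k)" unfolding SSs[of k, symmetric] by (simp add: sum_distrib_left mult_ac)
        finally show ?thesis .
      qed
      have "\<bar>\<psi> (\<lambda>x. g x * pk k x) - (\<Sum>y\<in>SS k. ww k y * g y)\<bar> \<le> 2 * d * \<psi> (pk k)"
        using a1 a2 by linarith
      then show ?thesis using fg by (simp add: d_def)
    qed
    show "\<exists>S w. finite S \<and> (\<forall>y\<in>S. 0 \<le> w y \<and> 0 < p y) \<and> (\<Sum>y\<in>S. w y) = \<psi> p \<and>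
          (\<forall>f\<in>insert g F. \<bar>\<psi> (\<lambda>x. f x * p x) - (\<Sum>y\<in>S. w y * f y)\<bar> \<le> \<epsilon> * \<psi> p)"
    proof (intro exI[of _ S] exI[of _ w] conjI ballI)
      show "finite S" unfolding S_def using fI SSf by auto
    next
      fix y assume y: "y \<in> S"
      show "0 \<le> w y" unfolding w_def using SSp by (intro sum_nonneg) auto
      from y obtain k where k: "k \<in> I" "y \<in> SS k" unfolding S_def by blast
      then have "0 < pk k y" using SSp by blast
      then show "0 < p y" unfolding pk_def using p(2)[rule_format, of y] hat_nonneg[of d k "g y"]
        by (metis less_eq_real_def mult_zero_left)
    next
      have "(\<Sum>y\<in>S. w y) = (\<Sum>y\<in>S. w y * 1)" by simp
      also have "\<dots> = (\<Sum>k\<in>I. \<Sum>y\<in>SS k. ww k y)" using mix[of "\<lambda>_. 1"] by simp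
      also have "\<dots> = (\<Sum>k\<in>I. \<psi> (pk k))" using SSs by simp
      also have "\<dots> = \<psi> (\<lambda>x. 1 * p x)" using psi_split[OF fs_const[OF fspace_CKX, of 1]] by simp
      finally show "(\<Sum>y\<in>S. w y) = \<psi> p" by simp
    next
      fix f assume f: "f \<in> insert g F"
      then have fC: "f \<in> CKX act K" using gC FC by auto
      have "\<bar>\<psi> (\<lambda>x. f x * p x) - (\<Sum>y\<in>S. w y * f y)\<bar> =
            \<bar>(\<Sum>k\<in>I. \<psi> (\<lambda>x. f x * pk k x)) - (\<Sum>k\<in>I. \<Sum>y\<in>SS k. ww k y * f y)\<bar>"
        using psi_split[OF fC] mix[of f] by simp
      also have "\<dots> \<le> (\<Sum>k\<in>I. \<epsilon> * \<psi> (pk k))"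
        by (rule sum_abs_diff_le) (rule perk[OF _ f])
      also have "\<dots> = \<epsilon> * \<psi> p"
        using psi_split[OF fs_const[OF fspace_CKX, of 1]] by (simp add: sum_distrib_left[symmetric])
      finally show "\<bar>\<psi> (\<lambda>x. f x * p x) - (\<Sum>y\<in>S. w y * f y)\<bar> \<le> \<epsilon> * \<psi> p" .
    qed
  qed
qed

lemma approx:
  assumes st: "is_state (CKX act K) \<psi>" and e: "\<epsilon> > 0" and F: "finite F" "F \<subseteq> CKX act K"
  shows "\<exists>S w. finite S \<and> (\<forall>y\<in>S. 0 \<le> w y) \<and> (\<Sum>y\<in>S. w y) = 1 \<and>
     (\<forall>f\<in>F. \<bar>\<psi> f - (\<Sum>y\<in>S. w y * f y)\<bar> \<le> \<epsilon>)"
proof -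
  have 1: "(\<lambda>x. 1::real) \<in> CKX act K" by (rule fs_const[OF fspace_CKX])
  from approx_gen[OF st e F, rule_format, OF 1] obtain S w where
    "finite S" "\<forall>y\<in>S. 0 \<le> w y" "(\<Sum>y\<in>S. w y) = \<psi> (\<lambda>x. 1)"
    "\<forall>f\<in>F. \<bar>\<psi> (\<lambda>x. f x * 1) - (\<Sum>y\<in>S. w y * f y)\<bar> \<le> \<epsilon> * \<psi> (\<lambda>x. 1)"
    by auto
  then show ?thesis using st_one[OF st] by (intro exI[of _ S] exI[of _ w]) auto
qed

end


lemma cj_shift:
  assumes M: "is_subgroup M" and m: "m \<in> M"
  shows "cj (k + m) M = cj k M"
proof -
  have "x \<in> cj (k + m) M \<longleftrightarrow> x \<in> cj k M" for x
  proof -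
    have e: "- (k + m) + x + (k + m) = - m + (- k + x + k) + m" by (simp only: minus_add add.assoc)
    have "- m + z + m \<in> M \<longleftrightarrow> z \<in> M" for z
    proof
      assume h: "- m + z + m \<in> M"
      have "m + (- m + z + m) + - m \<in> M" by (rule sg_add[OF M sg_add[OF M m h] sg_minus[OF M m]])
      then show "z \<in> M" by (simp add: add.assoc)
    next
      assume "z \<in> M" then show "- m + z + m \<in> M" using M m by (intro sg_add sg_minus) auto
    qed
    then show ?thesis unfolding cj_mem e by simp
  qed
  then show ?thesis by auto
qed

context bset begin

definition M0 :: "'g set \<Rightarrow> 'g set" where "M0 Gs = K \<inter> (\<Inter>g\<in>Gs. cj g K)"
definition NC :: "'g set \<Rightarrow> 'g set" where "NC Gs = \<Inter>((\<lambda>k. cj k (M0 Gs)) ` K)"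

lemma M0_sg: "is_subgroup (M0 Gs)"
  unfolding M0_def by (rule sg_Int[OF sgK], rule sg_Inter) (auto intro: sg_cj sgK)

lemma M0_open: "finite Gs \<Longrightarrow> open (M0 Gs)"
  unfolding M0_def by (intro open_Int oK open_INT) (auto intro: open_cj oK)

lemma M0_sub: "M0 Gs \<subseteq> K" "g \<in> Gs \<Longrightarrow> M0 Gs \<subseteq> cj g K" by (auto simp: M0_def)

lemma NC_sub: "NC Gs \<subseteq> M0 Gs"
proof -
  have "cj 0 (M0 Gs) = M0 Gs" by (auto simp: cj_mem)
  then show ?thesis unfolding NC_def using sg_0[OF sgK] by blast
qed

lemma NC_sg: "is_subgroup (NC Gs)"
  unfolding NC_def by (rule sg_Inter) (auto intro: sg_cj M0_sg)

lemma NC_normal: "k \<in> K \<Longrightarrow> n \<in> NC Gs \<Longrightarrow> k + n + - k \<in> NC Gs"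
proof -
  assume k: "k \<in> K" and n: "n \<in> NC Gs"
  show ?thesis unfolding NC_def
  proof (rule InterI)
    fix X assume "X \<in> (\<lambda>k. cj k (M0 Gs)) ` K"
    then obtain k' where k': "k' \<in> K" "X = cj k' (M0 Gs)" by auto
    have "- k + k' \<in> K" using k k' sgK by (intro sg_add sg_minus) auto
    then have "n \<in> cj (- k + k') (M0 Gs)" using n unfolding NC_def by blast
    then have "- (- k + k') + n + (- k + k') \<in> M0 Gs" by (simp add: cj_mem)
    moreover have "- (- k + k') + n + (- k + k') = - k' + (k + n + - k) + k'"
      by (simp only: minus_add minus_minus add.assoc)
    ultimately show "k + n + - k \<in> X" using k' by (simp add: cj_mem)
  qed
qed

lemma NC_open: "finite Gs \<Longrightarrow> open (NC Gs)"
proof -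
  assume fG: "finite Gs"
  have sub: "(\<lambda>k. cj k (M0 Gs)) ` K \<subseteq> (\<lambda>C. cj (rep C) (M0 Gs)) ` lcos K (M0 Gs)"
  proof
    fix X assume "X \<in> (\<lambda>k. cj k (M0 Gs)) ` K"
    then obtain k where k: "k \<in> K" "X = cj k (M0 Gs)" by auto
    let ?C = "(\<lambda>m. k + m) ` M0 Gs"
    have C: "?C \<in> lcos K (M0 Gs)" using k(1) by (rule lcos_mem)
    then have "rep ?C \<in> ?C" by (rule lcos_rep_in[OF M0_sg])
    then obtain m where m: "m \<in> M0 Gs" "rep ?C = k + m" by auto
    then have "cj (rep ?C) (M0 Gs) = X" using cj_shift[OF M0_sg m(1)] k by simp
    then show "X \<in> (\<lambda>C. cj (rep C) (M0 Gs)) ` lcos K (M0 Gs)" using C by blast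
  qed
  have "finite (lcos K (M0 Gs))"
    by (rule lcos_finite[OF sgK M0_sg M0_sub(1) M0_open[OF fG] cK])
  then have "finite ((\<lambda>k. cj k (M0 Gs)) ` K)" using sub finite_subset by blast
  then show ?thesis unfolding NC_def
    by (rule open_Inter) (auto intro: open_cj M0_open[OF fG])
qed

lemma NC_sub_K: "NC Gs \<subseteq> K" using NC_sub M0_sub by blast

definition LL :: "'g set \<Rightarrow> 'g set set" where "LL Gs = lcos K (NC Gs)"

lemma LL_fin: "finite Gs \<Longrightarrow> finite (LL Gs)"
  unfolding LL_def by (rule lcos_finite[OF sgK NC_sg NC_sub_K NC_open cK])

lemma LL_card: "finite Gs \<Longrightarrow> card (LL Gs) > 0"
proof -
  assume "finite Gs"
  moreover have "LL Gs \<noteq> {}" unfolding LL_def lcos_def using sg_0[OF sgK] by auto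
  ultimately show ?thesis using LL_fin card_gt_0_iff by blast
qed

lemma LL_rep: "D \<in> LL Gs \<Longrightarrow> rep D \<in> D \<and> rep D \<in> K"
  unfolding LL_def using lcos_rep_in[OF NC_sg] lcos_sub[OF sgK NC_sub_K] by blast

definition nu :: "'g set \<Rightarrow> 'x \<Rightarrow> ('x \<Rightarrow> real) \<Rightarrow> real" where
  "nu Gs x h = (1 / real (card (LL Gs))) * (\<Sum>D\<in>LL Gs. h (act (rep D) x))"

lemma nu_CKX: "finite Gs \<Longrightarrow> a \<in> CKX act K \<Longrightarrow> nu Gs x a = a x"
proof -
  assume fG: "finite Gs" and a: "a \<in> CKX act K"
  have "(\<Sum>D\<in>LL Gs. a (act (rep D) x)) = (\<Sum>D\<in>LL Gs. a x)"
    by (rule sum.cong[OF refl]) (use CKX_inv[OF a] LL_rep in blast)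
  then show ?thesis unfolding nu_def using LL_card[OF fG] by simp
qed

lemma nu_inv:
  assumes fG: "finite Gs" and l: "l \<in> K" and hN: "\<And>n z. n \<in> NC Gs \<Longrightarrow> h (act n z) = h z"
  shows "nu Gs x (\<lambda>y. h (act l y)) = nu Gs x h"
proof -
  have tm: "h (act l (act (rep D) x)) = h (act (rep ((\<lambda>m. l + m) ` D)) x)" if D: "D \<in> LL Gs" for D
  proof -
    let ?D' = "(\<lambda>m. l + m) ` D"
    have D': "?D' \<in> lcos K (NC Gs)" using lcos_trans[OF sgK l] D unfolding LL_def by blast
    have in1: "l + rep D \<in> ?D'" using LL_rep[OF D] by blast
    have "?D' = (\<lambda>m. rep ?D' + m) ` NC Gs"
      using lcos_rep[OF NC_sg D' lcos_rep_in[OF NC_sg D']] .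
    then obtain n where n: "n \<in> NC Gs" "l + rep D = rep ?D' + n" using in1 by auto
    have rK: "rep ?D' \<in> K" using LL_rep[of ?D'] D' unfolding LL_def by blast
    have n': "rep ?D' + n + - rep ?D' \<in> NC Gs" by (rule NC_normal[OF rK n(1)])
    have "act l (act (rep D) x) = act (rep ?D' + n + - rep ?D') (act (rep ?D') x)"
      by (simp only: act_add[symmetric] add.assoc[symmetric] n(2)) (simp add: add.assoc)
    then show ?thesis using hN[OF n'] by simp
  qed
  have "(\<Sum>D\<in>LL Gs. h (act l (act (rep D) x))) = (\<Sum>D\<in>LL Gs. h (act (rep ((\<lambda>m. l + m) ` D)) x))"
    using tm by (rule sum.cong[OF refl])
  also have "\<dots> = (\<Sum>D\<in>LL Gs. h (act (rep D) x))"
    using sum.reindex_bij_betw[OF lcos_bij[OF sgK l, of "NC Gs"], of "\<lambda>D. h (act (rep D) x)"]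
    unfolding LL_def by simp
  finally show ?thesis unfolding nu_def by simp
qed

lemma nu_add: "nu Gs x (\<lambda>y. f y + h y) = nu Gs x f + nu Gs x h"
  unfolding nu_def by (simp add: sum.distrib distrib_left)
lemma nu_cmul: "nu Gs x (\<lambda>y. c * f y) = c * nu Gs x f"
  unfolding nu_def by (simp add: sum_distrib_left[symmetric] mult_ac)
lemma nu_pos: "(\<And>y. 0 \<le> f y) \<Longrightarrow> 0 \<le> nu Gs x f"
  unfolding nu_def by (intro mult_nonneg_nonneg sum_nonneg) auto
lemma nu_one: "finite Gs \<Longrightarrow> nu Gs x (\<lambda>y. 1) = 1"
  unfolding nu_def using LL_card by simp
lemma nu_bound: "finite Gs \<Longrightarrow> (\<And>y. \<bar>f y\<bar> \<le> B) \<Longrightarrow> \<bar>nu Gs x f\<bar> \<le> B"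
proof -
  assume fG: "finite Gs" and b: "\<And>y. \<bar>f y\<bar> \<le> B"
  have "\<bar>\<Sum>D\<in>LL Gs. f (act (rep D) x)\<bar> \<le> (\<Sum>D\<in>LL Gs. B)"
    by (rule order.trans[OF sum_abs sum_mono]) (use b in auto)
  then have "\<bar>\<Sum>D\<in>LL Gs. f (act (rep D) x)\<bar> \<le> real (card (LL Gs)) * B" by simp
  then show ?thesis unfolding nu_def using LL_card[OF fG]
    by (simp add: abs_mult divide_le_eq mult.commute)
qed

end


lemma closed_imp_const: "closed {x. Q x} \<Longrightarrow> closed {x. P \<longrightarrow> Q x}"
  by (cases P) auto

lemma cont_coord: "continuous_on UNIV (\<lambda>\<Phi>::('a \<Rightarrow> real) \<Rightarrow> real. \<Phi> f)"
  by (rule continuous_on_product_coordinates)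

lemma closed_states: "closed {\<Phi> :: ('a \<Rightarrow> real) \<Rightarrow> real. is_state C \<Phi>}"
  unfolding is_state_def Ball_def
  by (intro closed_Collect_conj closed_Collect_all closed_imp_const closed_Collect_eq closed_Collect_le
      cont_coord continuous_on_add continuous_on_mult[OF continuous_on_const] continuous_on_const)

definition bnd :: "('a \<Rightarrow> real) \<Rightarrow> real" where "bnd h = (SUP y. \<bar>h y\<bar>)"

definition BX :: "(('a::topological_space \<Rightarrow> real) \<Rightarrow> real) set" where
  "BX = PiE UNIV (\<lambda>h. if h \<in> CX then {- bnd h .. bnd h} else {0})"
lemma compact_BX: "compact BX"
proof -
  have "compactin (product_topology (\<lambda>_. euclidean) UNIV) (BX :: (('a \<Rightarrow> real) \<Rightarrow> real) set)"
    unfolding BX_def compactin_PiE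
  proof (rule disjI2, intro ballI)
    fix h :: "'a \<Rightarrow> real"
    show "compactin euclidean (if h \<in> CX then {- bnd h .. bnd h} else {0})"
      unfolding compactin_euclidean_iff by (cases "h \<in> CX") (simp_all only: if_True if_False compact_Icc compact_sing)
  qed
  then show ?thesis by (simp add: euclidean_product_topology)
qed

lemma BX_iff: "\<Phi> \<in> BX \<longleftrightarrow> (\<forall>h. (h \<in> CX \<longrightarrow> \<bar>\<Phi> h\<bar> \<le> bnd h) \<and> (h \<notin> CX \<longrightarrow> \<Phi> h = 0))"
proof -
  have "\<Phi> \<in> BX \<longleftrightarrow> (\<forall>h. \<Phi> h \<in> (if h \<in> CX then {- bnd h .. bnd h} else {0}))"
    unfolding BX_def PiE_UNIV_domain Pi_iff by simp
  also have "\<dots> \<longleftrightarrow> (\<forall>h. (h \<in> CX \<longrightarrow> \<bar>\<Phi> h\<bar> \<le> bnd h) \<and> (h \<notin> CX \<longrightarrow> \<Phi> h = 0))"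
    by (intro all_cong1) (auto simp: abs_le_iff)
  finally show ?thesis .
qed

context bset begin

lemma bnd_ge: "(h :: 'x \<Rightarrow> real) \<in> CX \<Longrightarrow> \<bar>h y\<bar> \<le> bnd h"
proof -
  assume "h \<in> CX"
  then have "continuous_on UNIV h" by (simp add: CX_def)
  then have "compact (range h)" using compact_continuous_image cXc by blast
  then have "bounded (range h)" by (rule compact_imp_bounded)
  then obtain B where B0: "\<forall>x\<in>range h. norm x \<le> B" unfolding bounded_iff by blast
  have B: "\<forall>y. norm (h y) \<le> B" using B0 by blast
  have "bdd_above (range (\<lambda>y. \<bar>h y\<bar>))"
  proof (rule bdd_aboveI[where M = B])
    fix z assume "z \<in> range (\<lambda>y. \<bar>h y\<bar>)"
    then obtain y where "z = \<bar>h y\<bar>" by blast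
    then show "z \<le> B" using B by simp
  qed
  then show ?thesis unfolding bnd_def by (rule cSUP_upper[OF UNIV_I])
qed

lemma fin_stage:
  assumes st: "is_state (CKX act K) \<phi>" and fA: "finite A" "A \<subseteq> CKX act K" and fG: "finite Gs" and e: "\<epsilon> > 0"
  shows "\<exists>\<Phi>\<in>BX. is_state CX \<Phi> \<and> (\<forall>a\<in>A. \<bar>\<Phi> a - \<phi> a\<bar> \<le> \<epsilon>) \<and>
    (\<forall>f\<in>CKX act K. \<forall>g\<in>Gs. \<forall>l\<in>K. \<Phi> (\<lambda>y. f (act (- g) (act l y))) = \<Phi> (\<lambda>y. f (act (- g) y)))"
proof -
  obtain S w where S: "finite S" "\<forall>y\<in>S. 0 \<le> w y" "(\<Sum>y\<in>S. w y) = 1"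
    "\<forall>f\<in>A. \<bar>\<phi> f - (\<Sum>y\<in>S. w y * f y)\<bar> \<le> \<epsilon>"
    using approx[OF st e fA] by blast
  define \<Phi> where "\<Phi> h = (if h \<in> CX then (\<Sum>y\<in>S. w y * nu Gs y h) else 0)" for h
  have PhiX: "h \<in> CX \<Longrightarrow> \<Phi> h = (\<Sum>y\<in>S. w y * nu Gs y h)" for h by (simp add: \<Phi>_def)
  have "\<Phi> \<in> BX"
    unfolding BX_iff
  proof (intro allI conjI impI)
    fix h :: "'x \<Rightarrow> real" assume h: "h \<in> CX"
    have "\<bar>\<Sum>y\<in>S. w y * nu Gs y h\<bar> \<le> (\<Sum>y\<in>S. w y * bnd h)"
    proof (rule order.trans[OF sum_abs sum_mono])
      fix y assume y: "y \<in> S"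
      have "\<bar>nu Gs y h\<bar> \<le> bnd h" by (rule nu_bound[OF fG bnd_ge[OF h]])
      then show "\<bar>w y * nu Gs y h\<bar> \<le> w y * bnd h" using S(2) y by (simp add: abs_mult mult_left_mono)
    qed
    also have "\<dots> = bnd h" using S(3) by (simp add: sum_distrib_right[symmetric])
    finally show "\<bar>\<Phi> h\<bar> \<le> bnd h" using PhiX[OF h] by simp
  next
    fix h :: "'x \<Rightarrow> real" assume "h \<notin> CX" then show "\<Phi> h = 0" by (simp add: \<Phi>_def)
  qed
  moreover have "is_state CX \<Phi>"
    unfolding is_state_def
  proof (intro conjI ballI allI impI)
    fix f h :: "'x \<Rightarrow> real" assume f: "f \<in> CX" and h: "h \<in> CX"
    show "\<Phi> (\<lambda>x. f x + h x) = \<Phi> f + \<Phi> h"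
      using PhiX[OF fs_add[OF fspace_CX f h]] PhiX[OF f] PhiX[OF h]
      by (simp add: nu_add distrib_left sum.distrib)
  next
    fix f :: "'x \<Rightarrow> real" and c assume f: "f \<in> CX"
    show "\<Phi> (\<lambda>x. c * f x) = c * \<Phi> f"
      using PhiX[OF fs_cmul[OF fspace_CX f]] PhiX[OF f]
      by (simp add: nu_cmul sum_distrib_left mult_ac)
  next
    fix f :: "'x \<Rightarrow> real" assume f: "f \<in> CX" and p: "\<forall>x. 0 \<le> f x"
    show "0 \<le> \<Phi> f" unfolding PhiX[OF f] using S(2) p
      by (intro sum_nonneg mult_nonneg_nonneg nu_pos) auto
  next
    show "\<Phi> (\<lambda>x. 1) = 1" using PhiX[OF fs_const[OF fspace_CX]] S(3) nu_one[OF fG] by simp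
  qed
  moreover have "\<forall>a\<in>A. \<bar>\<Phi> a - \<phi> a\<bar> \<le> \<epsilon>"
  proof
    fix a assume a: "a \<in> A"
    then have aC: "a \<in> CKX act K" using fA by blast
    then have aX: "a \<in> CX" using CKX_CX by blast
    have "\<Phi> a = (\<Sum>y\<in>S. w y * nu Gs y a)" by (rule PhiX[OF aX])
    then have "\<Phi> a = (\<Sum>y\<in>S. w y * a y)" by (simp add: nu_CKX[OF fG aC])
    then show "\<bar>\<Phi> a - \<phi> a\<bar> \<le> \<epsilon>" using S(4) a by (simp add: abs_minus_commute)
  qed
  moreover have "\<forall>f\<in>CKX act K. \<forall>g\<in>Gs. \<forall>l\<in>K. \<Phi> (\<lambda>y. f (act (- g) (act l y))) = \<Phi> (\<lambda>y. f (act (- g) y))"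
  proof (intro ballI)
    fix f g l assume f: "f \<in> CKX act K" and g: "g \<in> Gs" and l: "l \<in> K"
    have fX: "f \<in> CX" using f CKX_CX by blast
    have h1: "(\<lambda>y. f (act (- g) y)) \<in> CX" by (rule CX_act[OF fX])
    have h2: "(\<lambda>y. f (act (- g) (act l y))) \<in> CX" using CX_act[OF h1, of l] by simp
    have hN: "f (act (- g) (act n z)) = f (act (- g) z)" if n: "n \<in> NC Gs" for n z
    proof -
      have "n \<in> cj g K" using n NC_sub M0_sub(2)[OF g] by blast
      then show ?thesis by (rule inv_M[OF f])
    qed
    have "nu Gs y (\<lambda>y. f (act (- g) (act l y))) = nu Gs y (\<lambda>y. f (act (- g) y))" for y
      using nu_inv[OF fG l, of "\<lambda>y. f (act (- g) y)"] hN by blast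
    then show "\<Phi> (\<lambda>y. f (act (- g) (act l y))) = \<Phi> (\<lambda>y. f (act (- g) y))"
      using PhiX[OF h1] PhiX[OF h2] by simp
  qed
  ultimately show ?thesis by blast
qed

definition TT :: "(('x \<Rightarrow> real) \<Rightarrow> real) \<Rightarrow> ('x \<Rightarrow> real) set \<times> 'g set \<times> nat \<Rightarrow> (('x \<Rightarrow> real) \<Rightarrow> real) set" where
  "TT \<phi> i = {\<Phi>. is_state CX \<Phi> \<and> (\<forall>a\<in>fst i. \<bar>\<Phi> a - \<phi> a\<bar> \<le> 1 / (real (snd (snd i)) + 1)) \<and>
     (\<forall>f\<in>CKX act K. \<forall>g\<in>fst (snd i). \<forall>l\<in>K. \<Phi> (\<lambda>y. f (act (- g) (act l y))) = \<Phi> (\<lambda>y. f (act (- g) y)))}"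

lemma TT_closed: "closed (TT \<phi> i)"
  unfolding TT_def Ball_def
  apply (rule closed_Collect_conj[OF closed_states])
  apply (intro closed_Collect_conj closed_Collect_all closed_imp_const closed_Collect_eq closed_Collect_le
      cont_coord continuous_on_add continuous_on_diff continuous_on_rabs continuous_on_const)
  done

lemma lift0:
  assumes st: "is_state (CKX act K) \<phi>"
  shows "\<exists>\<Phi>. is_state CX \<Phi> \<and> (\<forall>a\<in>CKX act K. \<Phi> a = \<phi> a) \<and>
    (\<forall>f\<in>CKX act K. \<forall>g. \<forall>l\<in>K. \<Phi> (\<lambda>y. f (act (- g) (act l y))) = \<Phi> (\<lambda>y. f (act (- g) y)))"
proof -
  define IX where "IX = {i :: ('x \<Rightarrow> real) set \<times> 'g set \<times> nat. finite (fst i) \<and> fst i \<subseteq> CKX act K \<and> finite (fst (snd i))}"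
  have "BX \<inter> (\<Inter>i\<in>IX. TT \<phi> i) \<noteq> {}"
  proof (rule compact_imp_fip_image[OF compact_BX TT_closed])
    fix I' assume I': "finite I'" "I' \<subseteq> IX"
    define A where "A = \<Union>(fst ` I')"
    define Gs where "Gs = \<Union>((\<lambda>i. fst (snd i)) ` I')"
    define n where "n = (\<Sum>i\<in>I'. snd (snd i))"
    have fA: "finite A" "A \<subseteq> CKX act K" using I' unfolding A_def IX_def by auto
    have fG: "finite Gs" using I' unfolding Gs_def IX_def by auto
    obtain \<Phi> where P: "\<Phi> \<in> BX" "is_state CX \<Phi>" "\<forall>a\<in>A. \<bar>\<Phi> a - \<phi> a\<bar> \<le> 1 / (real n + 1)"
      "\<forall>f\<in>CKX act K. \<forall>g\<in>Gs. \<forall>l\<in>K. \<Phi> (\<lambda>y. f (act (- g) (act l y))) = \<Phi> (\<lambda>y. f (act (- g) y))"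
      using fin_stage[OF st fA fG, of "1 / (real n + 1)"] by auto
    have "\<Phi> \<in> TT \<phi> i" if i: "i \<in> I'" for i
    proof -
      have le: "snd (snd i) \<le> n" unfolding n_def by (rule member_le_sum) (use I'(1) i in auto)
      have "1 / (real n + 1) \<le> 1 / (real (snd (snd i)) + 1)"
        using le by (intro divide_left_mono) auto
      moreover have "fst i \<subseteq> A" "fst (snd i) \<subseteq> Gs" using i unfolding A_def Gs_def by auto
      ultimately show ?thesis unfolding TT_def using P(2,3,4) by force
    qed
    then show "BX \<inter> (\<Inter>i\<in>I'. TT \<phi> i) \<noteq> {}" using P(1) by blast
  qed
  then obtain \<Phi> where P: "\<And>i. i \<in> IX \<Longrightarrow> \<Phi> \<in> TT \<phi> i" by blast
  have i0: "({}, {}, 0) \<in> IX" unfolding IX_def by simp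
  have "is_state CX \<Phi>" using P[OF i0] unfolding TT_def by simp
  moreover have "\<Phi> a = \<phi> a" if a: "a \<in> CKX act K" for a
  proof -
    have "\<bar>\<Phi> a - \<phi> a\<bar> \<le> 1 / (real n + 1)" for n
    proof -
      have "({a}, {}, n) \<in> IX" using a unfolding IX_def by simp
      then show ?thesis using P unfolding TT_def by auto
    qed
    show "\<Phi> a = \<phi> a"
    proof (rule ccontr)
      assume "\<Phi> a \<noteq> \<phi> a"
      then have "0 < \<bar>\<Phi> a - \<phi> a\<bar>" by simp
      then obtain n where "inverse (real (Suc n)) < \<bar>\<Phi> a - \<phi> a\<bar>"
        using reals_Archimedean by blast
      then show False using \<open>\<And>n. \<bar>\<Phi> a - \<phi> a\<bar> \<le> 1 / (real n + 1)\<close>[of n]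
        by (simp add: inverse_eq_divide add.commute)
    qed
  qed
  moreover have "\<Phi> (\<lambda>y. f (act (- g) (act l y))) = \<Phi> (\<lambda>y. f (act (- g) y))"
    if "f \<in> CKX act K" "l \<in> K" for f g l
  proof -
    have "({}, {g}, 0) \<in> IX" unfolding IX_def by simp
    then show ?thesis using P that unfolding TT_def by auto
  qed
  ultimately show ?thesis by blast
qed

lemma lift:
  assumes st: "is_state (CKX act K) \<phi>"
  shows "\<exists>\<Phi>. is_state CX \<Phi> \<and> (\<forall>f\<in>CKX act K. \<forall>g. \<Phi> (\<lambda>y. f (act g y)) = \<phi> (hyp_act act K (- g) f))"
proof -
  obtain \<Phi> where P: "is_state CX \<Phi>" "\<forall>a\<in>CKX act K. \<Phi> a = \<phi> a"
    "\<forall>f\<in>CKX act K. \<forall>g. \<forall>l\<in>K. \<Phi> (\<lambda>y. f (act (- g) (act l y))) = \<Phi> (\<lambda>y. f (act (- g) y))"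
    using lift0[OF st] by blast
  have "\<Phi> (\<lambda>y. f (act g y)) = \<phi> (hyp_act act K (- g) f)" if f: "f \<in> CKX act K" for f g
  proof -
    have "\<Phi> (hyp_act act K (- g) f) = \<Phi> (\<lambda>y. f (act (- (- g)) y))"
      by (rule hyp_state[OF P(1) f]) (use P(3) f in blast)
    moreover have "\<Phi> (hyp_act act K (- g) f) = \<phi> (hyp_act act K (- g) f)"
      using P(2) hyp_act_CKX[OF f] by blast
    ultimately show ?thesis by simp
  qed
  then show ?thesis using P(1) by blast
qed

end


context bset begin

lemma sp_part:
  assumes GB: "G_boundary act"
  shows "\<forall>\<phi>. is_state (CKX act K) \<phi> \<longrightarrow>
        (\<exists>x. wstar_adherent (CKX act K) (range (\<lambda>g. (\<lambda>f. \<phi> (hyp_act act K g f)))) (\<lambda>f. f x))"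
proof (intro allI impI)
  fix \<phi> assume st: "is_state (CKX act K) \<phi>"
  obtain \<Phi> where P: "is_state CX \<Phi>" "\<forall>f\<in>CKX act K. \<forall>g. \<Phi> (\<lambda>y. f (act g y)) = \<phi> (hyp_act act K (- g) f)"
    using lift[OF st] by blast
  obtain x where x: "wstar_adherent CX (range (\<lambda>g. (\<lambda>f. \<Phi> (\<lambda>y. f (act g y))))) (\<lambda>f. f x)"
    using GB P(1) unfolding G_boundary_def by blast
  have "wstar_adherent (CKX act K) (range (\<lambda>g. (\<lambda>f. \<phi> (hyp_act act K g f)))) (\<lambda>f. f x)"
    unfolding wstar_adherent_def
  proof (intro allI impI)
    fix F and \<epsilon> :: real assume F: "finite F \<and> F \<subseteq> CKX act K \<and> 0 < \<epsilon>"
    then have "finite F \<and> F \<subseteq> CX \<and> 0 < \<epsilon>" using CKX_CX by blast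
    then have "\<exists>ch\<in>range (\<lambda>g. (\<lambda>f. \<Phi> (\<lambda>y. f (act g y)))). \<forall>f\<in>F. \<bar>ch f - f x\<bar> < \<epsilon>"
      using x unfolding wstar_adherent_def by blast
    then obtain g where g: "\<forall>f\<in>F. \<bar>\<Phi> (\<lambda>y. f (act g y)) - f x\<bar> < \<epsilon>" by blast
    show "\<exists>\<psi>\<in>range (\<lambda>g. (\<lambda>f. \<phi> (hyp_act act K g f))). \<forall>f\<in>F. \<bar>\<psi> f - f x\<bar> < \<epsilon>"
    proof (intro bexI[of _ "\<lambda>f. \<phi> (hyp_act act K (- g) f)"] ballI)
      fix f assume f: "f \<in> F"
      then have "f \<in> CKX act K" using F by blast
      then have eq: "\<Phi> (\<lambda>y. f (act g y)) = \<phi> (hyp_act act K (- g) f)" using P(2) by blast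
      have "\<bar>\<Phi> (\<lambda>y. f (act g y)) - f x\<bar> < \<epsilon>" using g f by blast
      then show "\<bar>\<phi> (hyp_act act K (- g) f) - f x\<bar> < \<epsilon>" unfolding eq .
    qed simp
  qed
  then show "\<exists>x. wstar_adherent (CKX act K) (range (\<lambda>g. (\<lambda>f. \<phi> (hyp_act act K g f)))) (\<lambda>f. f x)" by blast
qed

lemma min_part:
  assumes GB: "G_boundary act"
  shows "\<forall>x \<psi>. is_state (CKX act K) \<psi> \<longrightarrow>
        wstar_adherent (CKX act K) (conv_functionals (range (\<lambda>g. (\<lambda>f. hyp_act act K g f x)))) \<psi>"
proof (intro allI impI)
  fix x \<psi> assume st: "is_state (CKX act K) \<psi>"
  have dx: "is_state (CKX act K) (\<lambda>f. f x)" unfolding is_state_def by simp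
  obtain \<Phi> where P: "is_state CX \<Phi>" "\<forall>f\<in>CKX act K. \<forall>g. \<Phi> (\<lambda>y. f (act g y)) = hyp_act act K (- g) f x"
    using lift[OF dx] by blast
  obtain z where z: "wstar_adherent CX (range (\<lambda>g. (\<lambda>f. \<Phi> (\<lambda>y. f (act g y))))) (\<lambda>f. f z)"
    using GB P(1) unfolding G_boundary_def by blast
  have dense: "closure (range (\<lambda>g. act g z)) = UNIV" using GB unfolding G_boundary_def by blast
  show "wstar_adherent (CKX act K) (conv_functionals (range (\<lambda>g. (\<lambda>f. hyp_act act K g f x)))) \<psi>"
    unfolding wstar_adherent_def
  proof (intro allI impI)
    fix F and \<epsilon> :: real assume F: "finite F \<and> F \<subseteq> CKX act K \<and> 0 < \<epsilon>"
    have fF: "finite F" and FC: "F \<subseteq> CKX act K" and e: "\<epsilon> > 0" using F by auto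
    have FX: "F \<subseteq> CX" using FC CKX_CX by blast
    have e4: "\<epsilon> / 4 > 0" using e by simp
    obtain S w where S: "finite S" "\<forall>y\<in>S. 0 \<le> w y" "(\<Sum>y\<in>S. w y) = 1"
      "\<forall>f\<in>F. \<bar>\<psi> f - (\<Sum>y\<in>S. w y * f y)\<bar> \<le> \<epsilon> / 4"
      using approx[OF st e4 fF FC] by blast
    have near: "\<exists>a. \<forall>f\<in>F. \<bar>f (act a z) - f y\<bar> < \<epsilon> / 4" for y
    proof -
      define U where "U = (\<Inter>f\<in>F. {u. \<bar>f u - f y\<bar> < \<epsilon> / 4})"
      have "open U" unfolding U_def
      proof (rule open_INT[OF fF], intro ballI)
        fix f assume "f \<in> F"
        then have fc: "continuous_on UNIV f" using FX by (auto simp: CX_def)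
        show "open {u. \<bar>f u - f y\<bar> < \<epsilon> / 4}"
          by (rule open_Collect_less[OF continuous_on_rabs[OF continuous_on_diff[OF fc continuous_on_const]] continuous_on_const])
      qed
      moreover have "y \<in> U" unfolding U_def using e by simp
      ultimately have "U \<inter> range (\<lambda>g. act g z) \<noteq> {}"
        using open_Int_closure_eq_empty[of U "range (\<lambda>g. act g z)"] dense by auto
      then show ?thesis unfolding U_def by auto
    qed
    then have "\<forall>y. \<exists>a. \<forall>f\<in>F. \<bar>f (act a z) - f y\<bar> < \<epsilon> / 4" by blast
    from choice[OF this] obtain a where a0: "\<forall>y. \<forall>f\<in>F. \<bar>f (act (a y) z) - f y\<bar> < \<epsilon> / 4" by blast
    have a: "\<And>y f. f \<in> F \<Longrightarrow> \<bar>f (act (a y) z) - f y\<bar> < \<epsilon> / 4" using a0 by blast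
    have gex: "\<exists>g. \<forall>f\<in>F. \<bar>hyp_act act K (- (a y + g)) f x - f (act (a y) z)\<bar> < \<epsilon> / 4" for y
    proof -
      let ?F' = "(\<lambda>f. (\<lambda>u. f (act (a y) u))) ` F"
      let ?R = "range (\<lambda>g. (\<lambda>f. \<Phi> (\<lambda>y. f (act g y))))"
      have "?F' \<subseteq> CX" using FX CX_act by blast
      then have fin: "finite ?F' \<and> ?F' \<subseteq> CX \<and> 0 < \<epsilon> / 4" using fF e4 by blast
      have zz: "\<forall>F' e. finite F' \<and> F' \<subseteq> CX \<and> 0 < e \<longrightarrow> (\<exists>ch\<in>?R. \<forall>f\<in>F'. \<bar>ch f - f z\<bar> < e)"
        using z unfolding wstar_adherent_def .
      obtain ch where ch: "ch \<in> ?R" "\<forall>h\<in>?F'. \<bar>ch h - h z\<bar> < \<epsilon> / 4"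
        using zz[rule_format, OF fin] by blast
      from ch(1) obtain g where g: "ch = (\<lambda>f. \<Phi> (\<lambda>y. f (act g y)))" by blast
      have "\<bar>hyp_act act K (- (a y + g)) f x - f (act (a y) z)\<bar> < \<epsilon> / 4" if f: "f \<in> F" for f
      proof -
        have "(\<lambda>u. f (act (a y) u)) \<in> ?F'" using f by blast
        then have "\<bar>ch (\<lambda>u. f (act (a y) u)) - f (act (a y) z)\<bar> < \<epsilon> / 4" using ch(2) by blast
        then have 1: "\<bar>\<Phi> (\<lambda>u. f (act (a y) (act g u))) - f (act (a y) z)\<bar> < \<epsilon> / 4" unfolding g .
        have "(\<lambda>u. f (act (a y) (act g u))) = (\<lambda>u. f (act (a y + g) u))" by (simp only: act_add)
        moreover have "\<Phi> (\<lambda>u. f (act (a y + g) u)) = hyp_act act K (- (a y + g)) f x"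
          using P(2) f FC by blast
        ultimately show ?thesis using 1 by simp
      qed
      then show ?thesis by blast
    qed
    then have "\<forall>y. \<exists>g. \<forall>f\<in>F. \<bar>hyp_act act K (- (a y + g)) f x - f (act (a y) z)\<bar> < \<epsilon> / 4" by blast
    from choice[OF this] obtain g where g0: "\<forall>y. \<forall>f\<in>F. \<bar>hyp_act act K (- (a y + g y)) f x - f (act (a y) z)\<bar> < \<epsilon> / 4"
      by blast
    have g: "\<And>y f. f \<in> F \<Longrightarrow> \<bar>hyp_act act K (- (a y + g y)) f x - f (act (a y) z)\<bar> < \<epsilon> / 4" using g0 by blast
    obtain e where eb: "bij_betw e {0..<card S} S" using ex_bij_betw_nat_finite[OF S(1)] by blast
    define n where "n = card S"
    define w' where "w' i = w (e i)" for i
    define \<phi>s where "\<phi>s i = (\<lambda>f. hyp_act act K (- (a (e i) + g (e i))) f x)" for i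
    define \<psi>' where "\<psi>' = (\<lambda>f. \<Sum>i<n. w' i * \<phi>s i f)"
    have reidx: "(\<Sum>i<n. u (e i)) = (\<Sum>y\<in>S. u y)" for u :: "'x \<Rightarrow> real"
      using sum.reindex_bij_betw[OF eb, of u] unfolding n_def by (simp add: atLeast0LessThan)
    have "\<psi>' \<in> conv_functionals (range (\<lambda>g. (\<lambda>f. hyp_act act K g f x)))"
      unfolding conv_functionals_def
    proof (intro CollectI exI[of _ n] exI[of _ w'] exI[of _ \<phi>s] conjI allI impI)
      fix i assume i: "i < n"
      then have "e i \<in> S" using eb unfolding n_def bij_betw_def by auto
      then show "0 \<le> w' i" using S(2) by (simp add: w'_def)
      show "\<phi>s i \<in> range (\<lambda>g. (\<lambda>f. hyp_act act K g f x))" unfolding \<phi>s_def by blast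
    next
      show "(\<Sum>i<n. w' i) = 1" using reidx[of w] S(3) by (simp add: w'_def)
    next
      show "\<psi>' = (\<lambda>f. \<Sum>i<n. w' i * \<phi>s i f)" by (simp add: \<psi>'_def)
    qed
    moreover have "\<forall>f\<in>F. \<bar>\<psi>' f - \<psi> f\<bar> < \<epsilon>"
    proof
      fix f assume f: "f \<in> F"
      have ps: "\<psi>' f = (\<Sum>y\<in>S. w y * hyp_act act K (- (a y + g y)) f x)"
        unfolding \<psi>'_def w'_def \<phi>s_def using reidx[of "\<lambda>y. w y * hyp_act act K (- (a y + g y)) f x"] by simp
      have b1: "\<bar>(\<Sum>y\<in>S. w y * hyp_act act K (- (a y + g y)) f x) - (\<Sum>y\<in>S. w y * f (act (a y) z))\<bar> \<le> (\<Sum>y\<in>S. w y * (\<epsilon> / 4))"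
      proof (rule sum_abs_diff_le)
        fix y assume "y \<in> S"
        then have "0 \<le> w y" using S(2) by blast
        then show "\<bar>w y * hyp_act act K (- (a y + g y)) f x - w y * f (act (a y) z)\<bar> \<le> w y * (\<epsilon> / 4)"
        proof -
          have "\<bar>w y * hyp_act act K (- (a y + g y)) f x - w y * f (act (a y) z)\<bar> = w y * \<bar>hyp_act act K (- (a y + g y)) f x - f (act (a y) z)\<bar>"
            using \<open>0 \<le> w y\<close> by (simp add: right_diff_distrib[symmetric] abs_mult)
          then show ?thesis using mult_left_mono[OF less_imp_le[OF g[OF f, of y]] \<open>0 \<le> w y\<close>] by simp
        qed
      qed
      have b2: "\<bar>(\<Sum>y\<in>S. w y * f (act (a y) z)) - (\<Sum>y\<in>S. w y * f y)\<bar> \<le> (\<Sum>y\<in>S. w y * (\<epsilon> / 4))"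
      proof (rule sum_abs_diff_le)
        fix y assume "y \<in> S"
        then have "0 \<le> w y" using S(2) by blast
        then show "\<bar>w y * f (act (a y) z) - w y * f y\<bar> \<le> w y * (\<epsilon> / 4)"
        proof -
          have "\<bar>w y * f (act (a y) z) - w y * f y\<bar> = w y * \<bar>f (act (a y) z) - f y\<bar>"
            using \<open>0 \<le> w y\<close> by (simp add: right_diff_distrib[symmetric] abs_mult)
          then show ?thesis using mult_left_mono[OF less_imp_le[OF a[OF f, of y]] \<open>0 \<le> w y\<close>] by simp
        qed
      qed
      have sw: "(\<Sum>y\<in>S. w y * (\<epsilon> / 4)) = \<epsilon> / 4" by (simp only: sum_distrib_right[symmetric] S(3) mult_1_left)
      have b3: "\<bar>\<psi> f - (\<Sum>y\<in>S. w y * f y)\<bar> \<le> \<epsilon> / 4" using S(4) f by blast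
      show "\<bar>\<psi>' f - \<psi> f\<bar> < \<epsilon>" unfolding ps using b1 b2 b3 sw e by linarith
    qed
    ultimately show "\<exists>\<psi>'\<in>conv_functionals (range (\<lambda>g. (\<lambda>f. hyp_act act K g f x))). \<forall>f\<in>F. \<bar>\<psi>' f - \<psi> f\<bar> < \<epsilon>"
      by blast
  qed
qed

end

theorem proposition4p7:
  fixes act :: "'g::{topological_group_add, t2_space} \<Rightarrow> 'x::t2_space \<Rightarrow> 'x"
    and K :: "'g set"
  assumes "locally compact (UNIV :: 'g set)"
    and "totally_disconnected_set (UNIV :: 'g set)"
    and "is_subgroup K" and "compact K" and "open K"
    and "compact (UNIV :: 'x set)"
    and "continuous_action act"
    and "G_boundary act"
    and "totally_disconnected_top (orbit_space_top act K)"
  shows "hyp_boundary act K"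
proof -
  interpret bset act K using assms(3-7) by unfold_locales
  show ?thesis unfolding hyp_boundary_def using min_part[OF assms(8)] sp_part[OF assms(8)] by blast
qed


end
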